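(* Let $d \ge 2$ be an integer and, for $\nu > 0$, let $h_1(\nu;d) = (\nu+1)^2 + 4 \nu^2 (d-1)$ and $$h_2(\nu;d) = \frac{(\nu + 1) \sqrt{h_1(\nu;d)} - (\nu+1)^2}{4 \nu^2 (d-1)} - \frac{1}{2}.$$ Then $\sup_{\nu > 0} h_2(\nu;d) = \lim_{\nu \to 0^+} h_2(\nu;d) = 0$. *)

theory Defs
  imports "HOL-Analysis.Analysis"
begin

definition h1 :: "real \<Rightarrow> nat \<Rightarrow> real" where
  "h1 \<nu> d = (\<nu> + 1)^2 + 4 * \<nu>^2 * (real d - 1)"

definition h2 :: "real \<Rightarrow> nat \<Rightarrow> real" where
  "h2 \<nu> d = ((\<nu> + 1) * sqrt (h1 \<nu> d) - (\<nu> + 1)^2) / (4 * \<nu>^2 * (real d - 1)) - 1/2"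

end

theory Submission
  imports Defs
begin

lemma h2_alt:
  assumes "\<nu> > 0" "d \<ge> 2"
  shows "h2 \<nu> d = (\<nu>+1) / (sqrt (h1 \<nu> d) + (\<nu>+1)) - 1/2"
proof -
  define a where "a = \<nu> + 1"
  define c where "c = 4 * \<nu>^2 * (real d - 1)"
  have a: "a > 0" using assms a_def by simp
  have c: "c > 0" using assms c_def by simp
  have h: "h1 \<nu> d = a^2 + c" by (simp add: h1_def a_def c_def)
  define s where "s = sqrt (a^2 + c)"
  have s2: "s^2 = a^2 + c" using a c s_def by simp
  have sp: "s > 0" using a c s_def by (simp add: add_pos_pos)
  have "(a * s - a^2) / c = a / (s + a)"
  proof -
    have "(a * s - a^2) * (s + a) = a * c" using s2 by (simp add: algebra_simps power2_eq_square)
    then show ?thesis using c sp a by (simp add: field_simps)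
  qed
  then show ?thesis unfolding h2_def h s_def[symmetric] a_def[symmetric] c_def[symmetric] by simp
qed

lemma h2_neg:
  assumes "\<nu> > 0" "d \<ge> 2"
  shows "h2 \<nu> d < 0"
proof -
  have "h1 \<nu> d > (\<nu>+1)^2" using assms by (simp add: h1_def)
  then have "sqrt (h1 \<nu> d) > sqrt ((\<nu>+1)^2)" by (subst real_sqrt_less_iff) 
  then have "sqrt (h1 \<nu> d) > \<nu>+1" using assms by simp
  then have "(\<nu>+1) / (sqrt (h1 \<nu> d) + (\<nu>+1)) < 1/2" using assms by (simp add: field_simps)
  then show ?thesis using h2_alt[OF assms] by simp
qed

theorem lemma5:
  fixes d :: nat
  assumes "d \<ge> 2"
  shows "(SUP \<nu>\<in>{0<..}. h2 \<nu> d) = 0 \<and> ((\<lambda>\<nu>. h2 \<nu> d) \<longlongrightarrow> 0) (at_right 0)"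
proof -
  let ?g = "\<lambda>\<nu>::real. (\<nu>+1) / (sqrt ((\<nu> + 1)^2 + 4 * \<nu>^2 * (real d - 1)) + (\<nu>+1)) - 1/2"
  have "(?g \<longlongrightarrow> ?g 0) (at_right 0)"
    by (intro tendsto_intros) auto
  then have g: "(?g \<longlongrightarrow> 0) (at_right 0)" by simp
  have ev: "eventually (\<lambda>\<nu>. ?g \<nu> = h2 \<nu> d) (at_right 0)"
    using eventually_at_right_less[of 0] 
    by eventually_elim (simp add: h2_alt[OF _ assms] h1_def)
  have L: "((\<lambda>\<nu>. h2 \<nu> d) \<longlongrightarrow> 0) (at_right (0::real))"
    using tendsto_cong[OF ev] g by simp
  have bdd: "bdd_above ((\<lambda>\<nu>. h2 \<nu> d) ` {0<..})"
    using h2_neg[OF _ assms] by (auto intro!: bdd_aboveI[where M=0] less_imp_le)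
  have le: "(SUP \<nu>\<in>{0<..}. h2 \<nu> d) \<le> 0"
    using h2_neg[OF _ assms] by (intro cSUP_least) (auto intro: less_imp_le)
  have "eventually (\<lambda>\<nu>. h2 \<nu> d \<le> (SUP \<nu>\<in>{0<..}. h2 \<nu> d)) (at_right 0)"
    using eventually_at_right_less[of "0::real"]
    by eventually_elim (intro cSUP_upper[OF _ bdd], simp)
  then have "0 \<le> (SUP \<nu>\<in>{0<..}. h2 \<nu> d)"
    using tendsto_upperbound[OF L] by simp
  with le L show ?thesis by simp
qed

end
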